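(* Let $G$ be a graph with $V(G)=\{v_1,\dots,v_n\}$, let $m\in\mathbb{N}$, let $d_1,\dots,d_n$ be nonnegative integers, and let $L$ be a list assignment for $G$ with $|L(v_i)|=m+d_i$ for each $i\in[n]$. Then \[P(G,L)\ge\left\lceil\frac{P_\ell(G,m)\prod_{i=1}^n(m+d_i)}{m^n}\right\rceil.\]
   Context: For a list assignment $L$ (a set $L(v)$ of colors for each vertex $v$), $P(G,L)$ is the number of proper colorings $f$ of $G$ with $f(v)\in L(v)$ for all $v$. An $m$-assignment has $|L(v)|=m$ for all $v$, and the list color function $P_\ell(G,m)$ is the minimum of $P(G,L)$ over all $m$-assignments $L$ for $G$. *)

theory Defs
  imports Complex_Main
begin

definition graph :: "'a set \<Rightarrow> ('a \<Rightarrow> 'a \<Rightarrow> bool) \<Rightarrow> bool" where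
  "graph V E \<longleftrightarrow> finite V \<and> (\<forall>u v. E u v \<longrightarrow> E v u) \<and> (\<forall>v. \<not> E v v)"

definition proper_L_colorings ::
  "'a set \<Rightarrow> ('a \<Rightarrow> 'a \<Rightarrow> bool) \<Rightarrow> ('a \<Rightarrow> 'c set) \<Rightarrow> ('a \<Rightarrow> 'c) set" where
  "proper_L_colorings V E L =
     {f. (\<forall>v\<in>V. f v \<in> L v) \<and> (\<forall>v. v \<notin> V \<longrightarrow> f v = undefined) \<and>
         (\<forall>u\<in>V. \<forall>v\<in>V. E u v \<longrightarrow> f u \<noteq> f v)}"

definition num_L_colorings :: "'a set \<Rightarrow> ('a \<Rightarrow> 'a \<Rightarrow> bool) \<Rightarrow> ('a \<Rightarrow> 'c set) \<Rightarrow> nat" where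
  "num_L_colorings V E L = card (proper_L_colorings V E L)"

definition m_assignment :: "'a set \<Rightarrow> nat \<Rightarrow> ('a \<Rightarrow> 'c set) \<Rightarrow> bool" where
  "m_assignment V m L \<longleftrightarrow> (\<forall>v\<in>V. finite (L v) \<and> card (L v) = m)"

text \<open>List color function P_l(G,m): minimum of P(G,L) over all m-assignments
  (colors taken from nat, which is w.l.o.g. since colors are mere labels).\<close>
definition list_color_function :: "'a set \<Rightarrow> ('a \<Rightarrow> 'a \<Rightarrow> bool) \<Rightarrow> nat \<Rightarrow> nat" where
  "list_color_function V E m =
     Inf {num_L_colorings V E L | L :: 'a \<Rightarrow> nat set. m_assignment V m L}"

end

theory Submission
  imports Defs "HOL-Library.FuncSet"
begin

lemma pc_remove:
  assumes "v \<in> V"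
  shows "proper_L_colorings V E (L(v := L v - {c})) = {f \<in> proper_L_colorings V E L. f v \<noteq> c}"
  using assms unfolding proper_L_colorings_def by auto

lemma pc_finite:
  assumes "finite V" "\<forall>v\<in>V. finite (L v)"
  shows "finite (proper_L_colorings V E L)"
proof (rule finite_subset[of _ "PiE V L"])
  show "proper_L_colorings V E L \<subseteq> PiE V L"
    unfolding proper_L_colorings_def PiE_def extensional_def by auto
  show "finite (PiE V L)" using assms by (intro finite_PiE) auto
qed

lemma card_filter_sum:
  assumes "finite A"
  shows "card {x\<in>A. P x} = (\<Sum>x\<in>A. if P x then 1 else 0 :: nat)"
proof -
  have "card {x\<in>A. P x} = (\<Sum>x\<in>{x\<in>A. P x}. 1 :: nat)" by simp
  also have "\<dots> = (\<Sum>x\<in>A. if P x then 1 else 0 :: nat)"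
    by (rule sum.inter_filter) (rule assms)
  finally show ?thesis .
qed

lemma count_lemma:
  assumes "finite V" "\<forall>v\<in>V. finite (L v)" "v \<in> V"
  shows "(\<Sum>c\<in>L v. num_L_colorings V E (L(v := L v - {c})))
         = (card (L v) - 1) * num_L_colorings V E L"
proof -
  let ?P = "proper_L_colorings V E L"
  have fP: "finite ?P" using pc_finite assms by blast
  have fL: "finite (L v)" using assms by auto
  have "(\<Sum>c\<in>L v. num_L_colorings V E (L(v := L v - {c})))
      = (\<Sum>c\<in>L v. \<Sum>f\<in>?P. if f v \<noteq> c then 1 else 0 :: nat)"
    unfolding num_L_colorings_def
    by (intro sum.cong refl) (simp add: pc_remove[OF assms(3)] card_filter_sum[OF fP])
  also have "\<dots> = (\<Sum>f\<in>?P. \<Sum>c\<in>L v. if f v \<noteq> c then 1 else 0 :: nat)"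
    by (rule sum.swap)
  also have "\<dots> = (\<Sum>f\<in>?P. card (L v) - 1)"
  proof (rule sum.cong[OF refl])
    fix f assume "f \<in> ?P"
    then have fv: "f v \<in> L v" using assms(3) unfolding proper_L_colorings_def by auto
    have "(\<Sum>c\<in>L v. if f v \<noteq> c then 1 else 0 :: nat) = card {c\<in>L v. f v \<noteq> c}"
      using card_filter_sum[OF fL] by simp
    also have "{c\<in>L v. f v \<noteq> c} = L v - {f v}" by auto
    also have "card \<dots> = card (L v) - 1" using fv fL by simp
    finally show "(\<Sum>c\<in>L v. if f v \<noteq> c then 1 else 0 :: nat) = card (L v) - 1" .
  qed
  also have "\<dots> = (card (L v) - 1) * num_L_colorings V E L"
    unfolding num_L_colorings_def by simp
  finally show ?thesis .
qed

lemma base_lemma: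
  fixes L :: "'a \<Rightarrow> 'c set"
  assumes "finite V" "\<forall>v\<in>V. finite (L v) \<and> card (L v) = m"
  shows "list_color_function V E m \<le> num_L_colorings V E L"
proof -
  define U where "U = (\<Union>v\<in>V. L v)"
  have fU: "finite U" unfolding U_def using assms by auto
  obtain h :: "'c \<Rightarrow> nat" and n where h: "h ` U = {i. i < n}" "inj_on h U"
    using finite_imp_inj_to_nat_seg[OF fU] by blast
  define L' where "L' = (\<lambda>v. h ` L v)"
  have ma: "m_assignment V m L'"
    unfolding m_assignment_def L'_def
  proof
    fix v assume v: "v \<in> V"
    have "inj_on h (L v)" using v by (intro inj_on_subset[OF h(2)]) (auto simp: U_def)
    then show "finite (h ` L v) \<and> card (h ` L v) = m" using assms v by (simp add: card_image)
  qed
  have finL: "finite (proper_L_colorings V E L)"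
    using pc_finite[OF assms(1)] using assms by auto
  define \<phi> where "\<phi> = (\<lambda>g x. if x \<in> V then inv_into U h (g x) else undefined)"
  have key: "\<And>g x. g \<in> proper_L_colorings V E L' \<Longrightarrow> x \<in> V \<Longrightarrow>
      inv_into U h (g x) \<in> L x \<and> h (inv_into U h (g x)) = g x"
  proof -
    fix g x assume g: "g \<in> proper_L_colorings V E L'" and x: "x \<in> V"
    then obtain c where c: "c \<in> L x" "g x = h c"
      unfolding proper_L_colorings_def L'_def by auto
    have "c \<in> U" using c x unfolding U_def by auto
    then have "inv_into U h (g x) = c" using c h(2) by simp
    then show "inv_into U h (g x) \<in> L x \<and> h (inv_into U h (g x)) = g x" using c by simp
  qed
  have "card (proper_L_colorings V E L') \<le> card (proper_L_colorings V E L)"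
  proof (rule card_inj_on_le[of \<phi>])
    show "\<phi> ` proper_L_colorings V E L' \<subseteq> proper_L_colorings V E L"
    proof
      fix y assume "y \<in> \<phi> ` proper_L_colorings V E L'"
      then obtain g where g: "g \<in> proper_L_colorings V E L'" and y: "y = \<phi> g" by auto
      have "\<forall>u\<in>V. \<forall>v\<in>V. E u v \<longrightarrow> g u \<noteq> g v" using g unfolding proper_L_colorings_def by auto
      then have "\<forall>u\<in>V. \<forall>v\<in>V. E u v \<longrightarrow> inv_into U h (g u) \<noteq> inv_into U h (g v)"
        using key[OF g] by metis
      then show "y \<in> proper_L_colorings V E L"
        unfolding y proper_L_colorings_def \<phi>_def using key[OF g] by auto
    qed
    show "inj_on \<phi> (proper_L_colorings V E L')"
    proof (rule inj_onI)
      fix g1 g2 assume g1: "g1 \<in> proper_L_colorings V E L'" and g2: "g2 \<in> proper_L_colorings V E L'"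
        and eq: "\<phi> g1 = \<phi> g2"
      show "g1 = g2"
      proof
        fix x show "g1 x = g2 x"
        proof (cases "x \<in> V")
          case True
          then have "inv_into U h (g1 x) = inv_into U h (g2 x)"
            using fun_cong[OF eq, of x] unfolding \<phi>_def by simp
          then show ?thesis using key[OF g1 True] key[OF g2 True] by metis
        next
          case False
          then show ?thesis using g1 g2 unfolding proper_L_colorings_def by auto
        qed
      qed
    qed
    show "finite (proper_L_colorings V E L)" by (rule finL)
  qed
  then have le: "num_L_colorings V E L' \<le> num_L_colorings V E L"
    unfolding num_L_colorings_def .
  have "list_color_function V E m \<le> num_L_colorings V E L'"
    unfolding list_color_function_def
    by (rule cInf_lower) (use ma in auto)
  then show ?thesis using le by simp
qed


lemma main_ind:
  fixes L :: "'a \<Rightarrow> 'c set"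
  assumes "finite V" "m \<ge> 1" "\<forall>v\<in>V. finite (L v) \<and> m \<le> card (L v)"
  shows "real (list_color_function V E m) * (\<Prod>v\<in>V. real (card (L v)))
         \<le> real (num_L_colorings V E L) * real m ^ card V"
  using assms(3)
proof (induction "\<Sum>v\<in>V. card (L v) - m" arbitrary: L rule: less_induct)
  case less
  show ?case
  proof (cases "\<exists>v\<in>V. card (L v) > m")
    case False
    then have eq: "\<forall>v\<in>V. finite (L v) \<and> card (L v) = m" using less.prems by force
    have "(\<Prod>v\<in>V. real (card (L v))) = real m ^ card V" using eq by simp
    moreover have "list_color_function V E m \<le> num_L_colorings V E L"
      by (rule base_lemma[OF assms(1) eq])
    ultimately show ?thesis by (simp add: mult_right_mono)
  next
    case True
    then obtain v where v: "v \<in> V" "card (L v) > m" by auto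
    define k where "k = card (L v)"
    have fLv: "finite (L v)" using less.prems v by auto
    have k2: "k \<ge> 2" using v assms(2) k_def by simp
    define R where "R = (\<Prod>u\<in>V-{v}. real (card (L u)))"
    have R0: "R \<ge> 0" unfolding R_def by (simp add: prod_nonneg)
    define Pl where "Pl = real (list_color_function V E m)"
    have Pl0: "Pl \<ge> 0" unfolding Pl_def by simp
    have prodL: "(\<Prod>u\<in>V. real (card (L u))) = real k * R"
      unfolding R_def k_def using prod.remove[OF assms(1) v(1)] by simp
    have IHc: "Pl * (real (k - 1) * R) \<le> real (num_L_colorings V E (L(v := L v - {c}))) * real m ^ card V"
      if c: "c \<in> L v" for c
    proof -
      let ?L = "L(v := L v - {c})"
      have cardc: "card (?L v) = k - 1" using c fLv k_def by simp
      have prems: "\<forall>u\<in>V. finite (?L u) \<and> m \<le> card (?L u)"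
        using less.prems cardc v k_def by auto
      have s1: "(\<Sum>u\<in>V. card (?L u) - m) = (card (?L v) - m) + (\<Sum>u\<in>V-{v}. card (?L u) - m)"
        using sum.remove[OF assms(1) v(1)] by blast
      have s2: "(\<Sum>u\<in>V. card (L u) - m) = (card (L v) - m) + (\<Sum>u\<in>V-{v}. card (L u) - m)"
        using sum.remove[OF assms(1) v(1)] by blast
      have s3: "(\<Sum>u\<in>V-{v}. card (?L u) - m) = (\<Sum>u\<in>V-{v}. card (L u) - m)"
        by (intro sum.cong) auto
      have lt: "(\<Sum>u\<in>V. card (?L u) - m) < (\<Sum>u\<in>V. card (L u) - m)"
        using s1 s2 s3 cardc v k_def by simp
      have "real (list_color_function V E m) * (\<Prod>u\<in>V. real (card (?L u)))
         \<le> real (num_L_colorings V E ?L) * real m ^ card V"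
        by (rule less.hyps[OF lt prems])
      moreover have "(\<Prod>u\<in>V. real (card (?L u))) = real (k - 1) * R"
      proof -
        have "(\<Prod>u\<in>V. real (card (?L u))) = real (card (?L v)) * (\<Prod>u\<in>V-{v}. real (card (?L u)))"
          using prod.remove[OF assms(1) v(1)] by blast
        also have "(\<Prod>u\<in>V-{v}. real (card (?L u))) = R" unfolding R_def by (intro prod.cong) auto
        finally show ?thesis using cardc by simp
      qed
      ultimately show ?thesis unfolding Pl_def by simp
    qed
    have "(\<Sum>c\<in>L v. Pl * (real (k - 1) * R))
        \<le> (\<Sum>c\<in>L v. real (num_L_colorings V E (L(v := L v - {c}))) * real m ^ card V)"
      by (rule sum_mono) (rule IHc)
    also have "\<dots> = real (\<Sum>c\<in>L v. num_L_colorings V E (L(v := L v - {c}))) * real m ^ card V"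
      by (simp add: sum_distrib_right)
    also have "\<dots> = real (k - 1) * (real (num_L_colorings V E L) * real m ^ card V)"
      using count_lemma[OF assms(1) _ v(1), of L E] less.prems k_def by simp
    finally have "real (k - 1) * (real k * Pl * R) \<le> real (k - 1) * (real (num_L_colorings V E L) * real m ^ card V)"
      using k_def by (simp add: algebra_simps)
    moreover have "real (k - 1) > 0" using k2 by simp
    ultimately have "real k * Pl * R \<le> real (num_L_colorings V E L) * real m ^ card V"
      by simp
    then show ?thesis using prodL unfolding Pl_def by (simp add: algebra_simps)
  qed
qed

theorem lemma25:
  fixes V :: "'a set" and E :: "'a \<Rightarrow> 'a \<Rightarrow> bool" and m :: nat
    and d :: "'a \<Rightarrow> nat" and L :: "'a \<Rightarrow> 'c set"
  assumes "graph V E"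
    and "\<forall>v\<in>V. finite (L v) \<and> card (L v) = m + d v"
  shows "real (num_L_colorings V E L) \<ge>
    of_int \<lceil>(real (list_color_function V E m) * (\<Prod>v\<in>V. real (m + d v)))
              / real m ^ card V\<rceil>"
proof -
  have fV: "finite V" using assms(1) unfolding graph_def by auto
  let ?X = "(real (list_color_function V E m) * (\<Prod>v\<in>V. real (m + d v))) / real m ^ card V"
  have "?X \<le> real (num_L_colorings V E L)"
  proof (cases "m = 0")
    case True
    show ?thesis
    proof (cases "V = {}")
      case True
      have "list_color_function V E m \<le> num_L_colorings V E L"
        by (rule base_lemma[OF fV]) (use True in auto)
      then show ?thesis using True by simp
    next
      case False
      then have "card V > 0" using fV by (simp add: card_gt_0_iff)
      then have "real m ^ card V = 0" using \<open>m = 0\<close> by (simp add: power_0_left)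
      then have "?X = 0" by (simp only: div_by_0)
      then show ?thesis by (metis of_nat_0_le_iff)
    qed
  next
    case False
    then have m1: "m \<ge> 1" by simp
    have "real (list_color_function V E m) * (\<Prod>v\<in>V. real (card (L v)))
         \<le> real (num_L_colorings V E L) * real m ^ card V"
      by (rule main_ind[OF fV m1]) (use assms(2) in auto)
    moreover have "(\<Prod>v\<in>V. real (card (L v))) = (\<Prod>v\<in>V. real (m + d v))"
      using assms(2) by (intro prod.cong) auto
    moreover have "real m ^ card V > 0" using m1 by simp
    ultimately show ?thesis by (simp add: divide_le_eq)
  qed
  then have "\<lceil>?X\<rceil> \<le> int (num_L_colorings V E L)"
    by (simp add: ceiling_le_iff)
  then show ?thesis by linarith
qed

end
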